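(* Let $V$ be a vector space of dimension $\mathbf{n}\ge3$ over an algebraically closed field $\mathbf{k}$ of characteristic $p$, with bilinear form $(,)$ and quadratic form $Q$ such that either (i) $Q=0$, $(x,x)=0$ for all $x$, $V^\perp=0$; or (ii) $Q\ne0$, $(x,y)=Q(x+y)-Q(x)-Q(y)$, $Q|_{V^\perp}$ injective. Let $\kappa\in\{0,1\}$ with $\mathbf{n}-\kappa$ even, $n=(\mathbf{n}-\kappa)/2$, and assume that $Q=0$ or $p=2$. Let $p_1\ge\dots\ge p_\sigma\ge1$ be integers with sum $n$ (and $p_{\sigma+1}=1/2$ if $\kappa=1$). Let $g\in Is(V)$ be unipotent, $N=g-1$, and assume that the multiset of sizes of the Jordan blocks of $N$ on $V$ consists of $2p_1,2p_2,\dots,2p_\sigma$ (and $1$ if $\kappa=1$). Let $(w^t_i)_{t\in[1,\sigma+\kappa],i\in\mathbb{Z}}$ be a $(g,p_* )$-adapted collection. Then: (a) for $t\in[1,\sigma]$ and $\pi=p_t$: $(w^t_i,w^t_j)=\mathrm{sg}(j-i)\binom{|j-i|+\pi-1}{|j-i|-\pi}$ if $|j-i|\ge\pi$, and $(w^t_i,w^t_j)=0$ if $|j-i|<\pi$; (b) if $\kappa=1$, $(w^{\sigma+1}_i,w^{\sigma+1}_j)=0$ for all $i,j\in\mathbb{Z}$; (c) $(w^t_i,w^r_j)=0$ for all $t\ne r$ in $[1,\sigma+\kappa]$ and all $i,j\in\mathbb{Z}$.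
   Context: $V^\perp=\{x\in V;(x,V)=0\}$; $Is(V)$ is the group of $g\in GL(V)$ preserving $(,)$ and $Q$. For $i\in\mathbb{Z}-\{0\}$, $\mathrm{sg}(i)\in\{1,-1\}$ is the sign of $i$. A collection $w^t_i\in V$ is $(g,p_* )$-adapted if: (a) $w^t_{i+1}=gw^t_i$; (b) for $t\in[1,\sigma]$, $(w^t_i,w^t_j)=0$ if $|i-j|<p_t$ and $=1$ if $j-i=p_t$; (c) $(w^t_i,w^r_j)=0$ if $0\le i-j+p_r<2p_t$ and $1\le t<r\le\sigma$; (d) if $\kappa=1$, $(w^{\sigma+1}_i,w^{\sigma+1}_i)=2$; (e) if $\kappa=1$, $(w^t_i,w^{\sigma+1}_j)=0$ whenever $0\le i-j<2p_t$, $1\le t\le\sigma$; (f) $Q(w^t_i)=0$ for $t\in[1,\sigma]$ and $Q(w^{\sigma+1}_i)=1$ if $\kappa=1$. *)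

theory Defs
  imports "HOL-Computational_Algebra.Polynomial" "Jordan_Normal_Form.Jordan_Normal_Form"
begin

text \<open>The space V is carrier_vec nn (column vectors of length nn over the field).\<close>

definition bilinear_on :: "nat \<Rightarrow> ('k::field vec \<Rightarrow> 'k vec \<Rightarrow> 'k) \<Rightarrow> bool" where
  "bilinear_on nn B \<longleftrightarrow>
     (\<forall>x\<in>carrier_vec nn. \<forall>y\<in>carrier_vec nn. \<forall>z\<in>carrier_vec nn. \<forall>a.
        B (x + y) z = B x z + B y z \<and> B x (y + z) = B x y + B x z \<and>
        B (a \<cdot>\<^sub>v x) y = a * B x y \<and> B x (a \<cdot>\<^sub>v y) = a * B x y)"

definition quadratic_form_on :: "nat \<Rightarrow> ('k::field vec \<Rightarrow> 'k) \<Rightarrow> bool" where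
  "quadratic_form_on nn Q \<longleftrightarrow>
     (\<forall>x\<in>carrier_vec nn. \<forall>a. Q (a \<cdot>\<^sub>v x) = a^2 * Q x) \<and>
     bilinear_on nn (\<lambda>x y. Q (x + y) - Q x - Q y)"

definition perp_space :: "nat \<Rightarrow> ('k::field vec \<Rightarrow> 'k vec \<Rightarrow> 'k) \<Rightarrow> 'k vec set" where
  "perp_space nn B = {x \<in> carrier_vec nn. \<forall>y\<in>carrier_vec nn. B x y = 0}"

definition isometry_group :: "nat \<Rightarrow> ('k::field vec \<Rightarrow> 'k vec \<Rightarrow> 'k) \<Rightarrow> ('k vec \<Rightarrow> 'k) \<Rightarrow> 'k mat set" where
  "isometry_group nn B Q = {g \<in> carrier_mat nn nn. invertible_mat g \<and>
     (\<forall>x\<in>carrier_vec nn. \<forall>y\<in>carrier_vec nn. B (g *\<^sub>v x) (g *\<^sub>v y) = B x y) \<and>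
     (\<forall>x\<in>carrier_vec nn. Q (g *\<^sub>v x) = Q x)}"

definition unipotent :: "nat \<Rightarrow> 'k::field mat \<Rightarrow> bool" where
  "unipotent nn g \<longleftrightarrow> (\<exists>m. (g - 1\<^sub>m nn) ^\<^sub>m m = 0\<^sub>m nn nn)"

definition sg :: "int \<Rightarrow> int" where "sg i = (if i > 0 then 1 else -1)"

text \<open>(g,p_*)-adapted collection; indices t in [1, sigma+kappa], i in Z.
  The partition p is given as a function on {1..sigma}.\<close>
definition adapted ::
  "nat \<Rightarrow> ('k::field vec \<Rightarrow> 'k vec \<Rightarrow> 'k) \<Rightarrow> ('k vec \<Rightarrow> 'k) \<Rightarrow> 'k mat \<Rightarrow>
   nat \<Rightarrow> nat \<Rightarrow> (nat \<Rightarrow> nat) \<Rightarrow> (nat \<Rightarrow> int \<Rightarrow> 'k vec) \<Rightarrow> bool" where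
  "adapted nn B Q g \<kappa> \<sigma> p w \<longleftrightarrow>
     (\<forall>t\<in>{1..\<sigma>+\<kappa>}. \<forall>i. w t i \<in> carrier_vec nn) \<and>
     (\<forall>t\<in>{1..\<sigma>+\<kappa>}. \<forall>i. w t (i + 1) = g *\<^sub>v w t i) \<and>
     (\<forall>t\<in>{1..\<sigma>}. \<forall>i j. (\<bar>i - j\<bar> < int (p t) \<longrightarrow> B (w t i) (w t j) = 0) \<and>
                        (j - i = int (p t) \<longrightarrow> B (w t i) (w t j) = 1)) \<and>
     (\<forall>t r i j. 1 \<le> t \<and> t < r \<and> r \<le> \<sigma> \<and> 0 \<le> i - j + int (p r) \<and> i - j + int (p r) < 2 * int (p t)
          \<longrightarrow> B (w t i) (w r j) = 0) \<and>
     (\<kappa> = 1 \<longrightarrow> (\<forall>i. B (w (\<sigma>+1) i) (w (\<sigma>+1) i) = 2)) \<and>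
     (\<kappa> = 1 \<longrightarrow> (\<forall>t\<in>{1..\<sigma>}. \<forall>i j. 0 \<le> i - j \<and> i - j < 2 * int (p t) \<longrightarrow> B (w t i) (w (\<sigma>+1) j) = 0)) \<and>
     (\<forall>t\<in>{1..\<sigma>}. \<forall>i. Q (w t i) = 0) \<and>
     (\<kappa> = 1 \<longrightarrow> (\<forall>i. Q (w (\<sigma>+1) i) = 1))"

end

theory Submission
  imports Defs "Jordan_Normal_Form.Jordan_Normal_Form_Uniqueness"
begin


definition dlt :: "(int \<Rightarrow> 'b::minus) \<Rightarrow> int \<Rightarrow> 'b" where
  "dlt f m = f (m + 1) - f m"

lemma dltpow_Suc: "(dlt ^^ Suc a) f = (dlt ^^ a) (dlt f)"
  by (simp only: funpow_Suc_right comp_def)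

lemma dltpow_diff:
  fixes f h :: "int \<Rightarrow> 'a::ab_group_add"
  shows "(dlt ^^ a) (\<lambda>m. f m - h m) = (\<lambda>m. (dlt ^^ a) f m - (dlt ^^ a) h m)"
proof (induction a arbitrary: f h)
  case 0 then show ?case by simp
next
  case (Suc a)
  have "dlt (\<lambda>m. f m - h m) = (\<lambda>m. dlt f m - dlt h m)"
    by (rule ext) (simp add: dlt_def algebra_simps)
  then show ?case unfolding dltpow_Suc using Suc[of "dlt f" "dlt h"] by simp
qed

lemma dltpow_of_int:
  fixes h :: "int \<Rightarrow> int"
  shows "(dlt ^^ a) (\<lambda>m. (of_int (h m) :: 'a::ring_1)) = (\<lambda>m. of_int ((dlt ^^ a) h m))"
proof (induction a arbitrary: h)
  case 0 then show ?case by simp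
next
  case (Suc a)
  have "dlt (\<lambda>m. (of_int (h m) :: 'a)) = (\<lambda>m. of_int (dlt h m))"
    by (rule ext) (simp add: dlt_def)
  then show ?case unfolding dltpow_Suc using Suc[of "dlt h"] by simp
qed

lemma const_int_fun:
  fixes f :: "int \<Rightarrow> 'a"
  assumes "\<And>m. f (m + 1) = f m"
  shows "f m = f m0"
proof -
  have "f (m0 + int k) = f m0" for k
  proof (induction k)
    case (Suc k)
    have "f (m0 + int (Suc k)) = f (m0 + int k + 1)" by (simp add: ac_simps)
    also have "\<dots> = f (m0 + int k)" by (rule assms)
    finally show ?case using Suc by simp
  qed simp
  moreover have "f (m0 - int k) = f m0" for k
  proof (induction k)
    case (Suc k)
    have "f (m0 - int (Suc k)) = f (m0 - int (Suc k) + 1)" by (rule assms[symmetric])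
    also have "m0 - int (Suc k) + 1 = m0 - int k" by simp
    finally show ?case using Suc by simp
  qed simp
  ultimately show ?thesis
  proof (cases "m \<ge> m0")
    case True
    then have "m = m0 + int (nat (m - m0))" by simp
    then show ?thesis using \<open>\<And>k. f (m0 + int k) = f m0\<close> by metis
  next
    case False
    then have "m = m0 - int (nat (m0 - m))" by simp
    then show ?thesis using \<open>\<And>k. f (m0 - int k) = f m0\<close> by metis
  qed
qed

lemma dlt_unique:
  fixes f :: "int \<Rightarrow> 'a::ab_group_add"
  assumes "\<And>m. (dlt ^^ n) f m = 0" and "\<And>i. i < n \<Longrightarrow> f (m0 + int i) = 0"
  shows "f m = 0"
  using assms
proof (induction n arbitrary: f m)
  case 0 then show ?case by simp
next
  case (Suc n)
  have d0: "dlt f m' = 0" for m'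
  proof (rule Suc.IH)
    show "(dlt ^^ n) (dlt f) m = 0" for m using Suc.prems(1)[of m] unfolding dltpow_Suc .
    show "dlt f (m0 + int i) = 0" if "i < n" for i
      using Suc.prems(2)[of i] Suc.prems(2)[of "Suc i"] that by (simp add: dlt_def ac_simps)
  qed
  have "f m = f m0" by (rule const_int_fun) (use d0 in \<open>simp add: dlt_def\<close>)
  also have "f m0 = 0" using Suc.prems(2)[of 0] by simp
  finally show ?case .
qed

definition Cz :: "int \<Rightarrow> nat \<Rightarrow> int" where
  "Cz x d = (if x \<ge> 0 then int (nat x choose d) else (-1)^d * int ((nat (-x) + d - 1) choose d))"

lemma Cz_rat: "(of_int (Cz x d) :: rat) = of_int x gchoose d"
proof (cases "x \<ge> 0")
  case True
  then have "(of_int x :: rat) = of_nat (nat x)" by simp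
  then show ?thesis using True by (simp add: Cz_def binomial_gbinomial)
next
  case False
  define m where "m = nat (-x)"
  have m1: "m \<ge> 1" using False m_def by simp
  have x: "(of_int x :: rat) = - of_nat m" using False m_def by simp
  have "(of_int x :: rat) gchoose d = (-1)^d * (of_nat d - of_int x - 1 gchoose d)"
    by (rule gbinomial_negated_upper)
  also have "(of_nat d - of_int x - 1 :: rat) = of_nat (m + d - 1)" using x m1 by simp
  finally show ?thesis using False m_def by (simp add: Cz_def binomial_gbinomial)
qed

lemma Cz_0[simp]: "Cz x 0 = 1"
  by (simp add: Cz_def)

lemma Cz_pascal: "Cz (x + 1) (Suc d) = Cz x (Suc d) + Cz x d"
proof -
  have "(of_int (Cz (x + 1) (Suc d)) :: rat) = of_int (Cz x (Suc d) + Cz x d)"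
    unfolding of_int_add Cz_rat by (simp add: gbinomial_Suc_Suc)
  then show ?thesis by (simp only: of_int_eq_iff)
qed

lemma dlt_Cz: "dlt (\<lambda>m. Cz (m + c) (Suc d)) = (\<lambda>m. Cz (m + c) d)"
proof (rule ext)
  fix m
  have "Cz ((m + c) + 1) (Suc d) = Cz (m + c) (Suc d) + Cz (m + c) d" by (rule Cz_pascal)
  moreover have "m + 1 + c = (m + c) + 1" by simp
  ultimately show "dlt (\<lambda>m. Cz (m + c) (Suc d)) m = Cz (m + c) d" unfolding dlt_def by (metis add_diff_cancel_left')
qed

lemma dltpow_Cz: "(dlt ^^ a) (\<lambda>m. Cz (m + c) (d + a)) = (\<lambda>m. Cz (m + c) d)"
proof (induction a arbitrary: d)
  case 0 then show ?case by simp
next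
  case (Suc a)
  have "dlt (\<lambda>m. Cz (m + c) (d + Suc a)) = (\<lambda>m. Cz (m + c) (d + a))"
    using dlt_Cz[of c "d + a"] by simp
  then show ?case unfolding dltpow_Suc using Suc by simp
qed

lemma dltpow_Cz_zero: "(dlt ^^ Suc d) (\<lambda>m. Cz (m + c) d) = (\<lambda>m. 0)"
proof -
  have "(dlt ^^ Suc d) (\<lambda>m. Cz (m + c) d) = dlt ((dlt ^^ d) (\<lambda>m. Cz (m + c) (0 + d)))" by simp
  also have "\<dots> = dlt (\<lambda>m. Cz (m + c) 0)" by (simp only: dltpow_Cz)
  also have "\<dots> = (\<lambda>m. 0)" by (rule ext) (simp add: dlt_def)
  finally show ?thesis .
qed


lemma Cz_psi:
  assumes "\<pi> \<ge> 1"
  shows "Cz (m + (int \<pi> - 1)) (2 * \<pi> - 1) =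
    (if \<bar>m\<bar> \<ge> int \<pi> then sg m * int ((nat \<bar>m\<bar> + \<pi> - 1) choose (nat \<bar>m\<bar> - \<pi>)) else 0)"
proof -
  consider "m \<ge> int \<pi>" | "\<bar>m\<bar> < int \<pi>" | "m \<le> - int \<pi>" by linarith
  then show ?thesis
  proof cases
    case 1
    define k where "k = nat m"
    have mk: "m = int k" using 1 k_def by simp
    have "Cz (m + (int \<pi> - 1)) (2 * \<pi> - 1) = int ((k + \<pi> - 1) choose (2 * \<pi> - 1))"
      using 1 assms by (simp add: Cz_def mk nat_add_distrib nat_diff_distrib)
    also have "(k + \<pi> - 1) choose (2 * \<pi> - 1) = (k + \<pi> - 1) choose (k - \<pi>)"
      using 1 assms mk by (subst binomial_symmetric) (auto intro: arg_cong2[where f = "(choose)"])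
    finally show ?thesis using 1 assms mk by (simp add: sg_def)
  next
    case 2
    have "nat (m + (int \<pi> - 1)) < 2 * \<pi> - 1" using 2 assms by linarith
    then show ?thesis using 2 by (simp add: Cz_def)
  next
    case 3
    define k where "k = nat (-m)"
    have mk: "m = - int k" using 3 k_def by simp
    have kp: "k \<ge> \<pi>" using 3 mk by simp
    have "Cz (m + (int \<pi> - 1)) (2 * \<pi> - 1) = - int ((k + \<pi> - 1) choose (2 * \<pi> - 1))"
    proof -
      have neg: "\<not> m + (int \<pi> - 1) \<ge> 0" using 3 assms by simp
      have e: "nat (- (m + (int \<pi> - 1))) + (2 * \<pi> - 1) - 1 = k + \<pi> - 1" using kp assms mk by simp
      have o: "odd (2 * \<pi> - 1)" using assms by simp
      show ?thesis unfolding Cz_def using neg e o by simp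
    qed
    also have "(k + \<pi> - 1) choose (2 * \<pi> - 1) = (k + \<pi> - 1) choose (k - \<pi>)"
      using kp assms by (subst binomial_symmetric) (auto intro: arg_cong2[where f = "(choose)"])
    finally show ?thesis using 3 assms mk kp by (simp add: sg_def)
  qed
qed

lemma vec_minus_smult: "y \<in> carrier_vec n \<Longrightarrow> z \<in> carrier_vec n \<Longrightarrow> y - z = y + (-1::'a::field) \<cdot>\<^sub>v z"
  by (intro eq_vecI) auto

lemma bil_diff2:
  assumes B: "bilinear_on n B" and x: "x \<in> carrier_vec n" and y: "y \<in> carrier_vec n" and z: "z \<in> carrier_vec n"
  shows "B x (y - z) = B x y - B x z"
proof -
  have "B x (y - z) = B x (y + (-1) \<cdot>\<^sub>v z)" using vec_minus_smult[OF y z] by simp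
  also have "\<dots> = B x y + B x ((-1) \<cdot>\<^sub>v z)"
    using B x y z unfolding bilinear_on_def by (meson smult_carrier_vec)
  also have "B x ((-1) \<cdot>\<^sub>v z) = - B x z" using B x z unfolding bilinear_on_def by (metis mult_minus1)
  finally show ?thesis by simp
qed

lemma bil_diff1:
  assumes B: "bilinear_on n B" and x: "x \<in> carrier_vec n" and y: "y \<in> carrier_vec n" and z: "z \<in> carrier_vec n"
  shows "B (y - z) x = B y x - B z x"
proof -
  have "B (y - z) x = B (y + (-1) \<cdot>\<^sub>v z) x" using vec_minus_smult[OF y z] by simp
  also have "\<dots> = B y x + B ((-1) \<cdot>\<^sub>v z) x"
    using B x y z unfolding bilinear_on_def by (meson smult_carrier_vec)
  also have "B ((-1) \<cdot>\<^sub>v z) x = - B z x" using B x z unfolding bilinear_on_def by (metis mult_minus1)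
  finally show ?thesis by simp
qed

lemma dltpow_carrier:
  assumes "\<And>i. w i \<in> carrier_vec n"
  shows "(dlt ^^ a) w m \<in> carrier_vec n"
  using assms
proof (induction a arbitrary: w m)
  case 0 then show ?case by simp
next
  case (Suc a)
  have "\<And>i. dlt w i \<in> carrier_vec n" using Suc.prems by (simp add: dlt_def)
  then show ?case unfolding dltpow_Suc by (rule Suc.IH)
qed

lemma bil_dltpow2:
  assumes B: "bilinear_on n B" and u: "u \<in> carrier_vec n" and w: "\<And>i. w i \<in> carrier_vec n"
  shows "B u ((dlt ^^ a) w m) = (dlt ^^ a) (\<lambda>j. B u (w j)) m"
  using w
proof (induction a arbitrary: w m)
  case 0 then show ?case by simp
next
  case (Suc a)
  have c: "\<And>i. dlt w i \<in> carrier_vec n" using Suc.prems by (simp add: dlt_def)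
  have e: "(\<lambda>j. B u (dlt w j)) = dlt (\<lambda>j. B u (w j))"
    by (rule ext) (simp add: dlt_def bil_diff2[OF B u Suc.prems Suc.prems])
  show ?case unfolding dltpow_Suc Suc.IH[OF c] e ..
qed

lemma bil_dltpow1:
  assumes B: "bilinear_on n B" and u: "u \<in> carrier_vec n" and w: "\<And>i. w i \<in> carrier_vec n"
  shows "B ((dlt ^^ a) w m) u = (dlt ^^ a) (\<lambda>j. B (w j) u) m"
  using w
proof (induction a arbitrary: w m)
  case 0 then show ?case by simp
next
  case (Suc a)
  have c: "\<And>i. dlt w i \<in> carrier_vec n" using Suc.prems by (simp add: dlt_def)
  have e: "(\<lambda>j. B (dlt w j) u) = dlt (\<lambda>j. B (w j) u)"
    by (rule ext) (simp add: dlt_def bil_diff1[OF B u Suc.prems Suc.prems])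
  show ?case unfolding dltpow_Suc Suc.IH[OF c] e ..
qed

lemma Npow_dlt:
  fixes g :: "'a::field mat"
  assumes g: "g \<in> carrier_mat n n" and w: "\<And>i. w i \<in> carrier_vec n"
    and sh: "\<And>i. w (i + 1) = g *\<^sub>v w i"
  shows "((g - 1\<^sub>m n) ^\<^sub>m a) *\<^sub>v w m = (dlt ^^ a) w m"
  using w sh
proof (induction a arbitrary: w m)
  case 0 then show ?case by simp
next
  case (Suc a)
  have c: "\<And>i. dlt w i \<in> carrier_vec n" unfolding dlt_def using Suc.prems(1) by (metis minus_carrier_vec)
  have s: "dlt w (i + 1) = g *\<^sub>v dlt w i" for i
  proof -
    have "dlt w (i + 1) = w (i + 1 + 1) - w (i + 1)" by (simp add: dlt_def)
    also have "\<dots> = g *\<^sub>v w (i + 1) - g *\<^sub>v w i" using Suc.prems(2) by metis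
    also have "\<dots> = g *\<^sub>v dlt w i" unfolding dlt_def
      by (rule mult_minus_distrib_mat_vec[symmetric, OF g Suc.prems(1)[of "i + 1"] Suc.prems(1)[of i]])
    finally show ?thesis .
  qed
  have N: "g - 1\<^sub>m n \<in> carrier_mat n n" using g by (metis minus_carrier_mat one_carrier_mat)
  have "((g - 1\<^sub>m n) ^\<^sub>m Suc a) *\<^sub>v w m = ((g - 1\<^sub>m n) ^\<^sub>m a) *\<^sub>v ((g - 1\<^sub>m n) *\<^sub>v w m)"
    by (simp add: assoc_mult_mat_vec[OF pow_carrier_mat[OF N] N Suc.prems(1)])
  also have "(g - 1\<^sub>m n) *\<^sub>v w m = dlt w m"
    using minus_mult_distrib_mat_vec[OF g _ Suc.prems(1)[of m], of "1\<^sub>m n"] Suc.prems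
    by (simp add: dlt_def)
  also have "((g - 1\<^sub>m n) ^\<^sub>m a) *\<^sub>v dlt w m = (dlt ^^ a) (dlt w) m"
    by (rule Suc.IH[of "dlt w", OF c s])
  finally show ?case unfolding dltpow_Suc .
qed

lemma LA_inj:
  fixes f :: "'i \<Rightarrow> 'a::field vec"
  assumes I: "finite I" and fI: "f ` I \<subseteq> carrier_vec n"
   and indep: "\<And>c. finsum (module_vec TYPE('a) n) (\<lambda>i. c i \<cdot>\<^sub>v f i) I = 0\<^sub>v n \<Longrightarrow> \<forall>i\<in>I. c i = 0"
  shows "inj_on f I"
proof (rule inj_onI, rule ccontr)
  interpret vec_space "TYPE('a)" n .
  fix i j assume i: "i \<in> I" and j: "j \<in> I" and fij: "f i = f j" and ne: "i \<noteq> j"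
  define c where "c = (\<lambda>k. if k = i then (1::'a) else if k = j then -1 else 0)"
  have fin2: "finite {i,j}" by simp
  have fv: "\<And>k. k \<in> I \<Longrightarrow> f k \<in> carrier_vec n" using fI by auto
  have "finsum V (\<lambda>k. c k \<cdot>\<^sub>v f k) I = finsum V (\<lambda>k. c k \<cdot>\<^sub>v f k) ({i,j} \<union> (I - {i,j}))"
  proof -
    have "I = {i,j} \<union> (I - {i,j})" using i j by blast
    then show ?thesis by simp
  qed
  also have "\<dots> = finsum V (\<lambda>k. c k \<cdot>\<^sub>v f k) {i,j} + finsum V (\<lambda>k. c k \<cdot>\<^sub>v f k) (I - {i,j})"
    by (rule finsum_Un_disjoint, insert I i j fv, auto)
  also have "finsum V (\<lambda>k. c k \<cdot>\<^sub>v f k) (I - {i,j}) = 0\<^sub>v n"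
    by (rule finsum_all0, insert fv, auto simp: c_def)
  also have "finsum V (\<lambda>k. c k \<cdot>\<^sub>v f k) {i,j} = 1 \<cdot>\<^sub>v f i + (-1) \<cdot>\<^sub>v f j"
    using ne fv[OF i] fv[OF j] by (simp add: finsum_insert c_def)
  also have "1 \<cdot>\<^sub>v f i + (-1) \<cdot>\<^sub>v f j + 0\<^sub>v n = 0\<^sub>v n" using fij fv[OF j]
  proof -
    have "(-1) \<cdot>\<^sub>v f j = - f j" by auto
    then show ?thesis using fij fv[OF j] by simp
  qed
  finally have "\<forall>k\<in>I. c k = 0" by (rule indep)
  with i have "c i = 0" by blast
  then show False by (simp add: c_def)
qed


lemma LA:
  fixes M :: "'a::field mat" and f :: "'i \<Rightarrow> 'a vec"
  assumes M: "M \<in> carrier_mat n n" and I: "finite I" and fI: "f ` I \<subseteq> carrier_vec n"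
   and indep: "\<And>c. finsum (module_vec TYPE('a) n) (\<lambda>i. c i \<cdot>\<^sub>v f i) I = 0\<^sub>v n \<Longrightarrow> \<forall>i\<in>I. c i = 0"
   and img: "\<And>i. i\<in>I \<Longrightarrow> \<exists>z\<in>carrier_vec n. f i = M *\<^sub>v z"
   and card: "n \<le> card I + kernel_dim M"
   and z: "z \<in> carrier_vec n"
  shows "\<exists>c. M *\<^sub>v z = finsum (module_vec TYPE('a) n) (\<lambda>i. c i \<cdot>\<^sub>v f i) I"
proof -
  interpret vec_space "TYPE('a)" n .
  have inj: "inj_on f I" by (rule LA_inj[OF I fI indep])
  define Y where "Y = f ` I"
  have Yc: "Y \<subseteq> carrier_vec n" using fI Y_def by auto
  have finY: "finite Y" using I Y_def by auto
  have cardY: "card Y = card I" using inj Y_def card_image by auto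
  have lc: "lincomb a Y = finsum V (\<lambda>i. a (f i) \<cdot>\<^sub>v f i) I" for a
    unfolding lincomb_def Y_def
  proof (rule finsum_reindex)
    show "(\<lambda>v. a v \<cdot>\<^sub>v v) \<in> f ` I \<rightarrow> carrier_vec n" using fI by auto
  qed (rule inj)
  have liY: "lin_indpt Y"
  proof (rule finite_lin_indpt2[OF finY Yc])
    fix a assume "lincomb a Y = 0\<^sub>v n"
    then have "finsum V (\<lambda>i. a (f i) \<cdot>\<^sub>v f i) I = 0\<^sub>v n" using lc by simp
    then have "\<forall>i\<in>I. a (f i) = 0" by (rule indep)
    then show "\<forall>v\<in>Y. a v = 0" unfolding Y_def by auto
  qed
  define T where "T = (\<lambda>v. M *\<^sub>v v)"
  have lm: "linear_map class_ring V V T"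
    unfolding linear_map_def mod_hom_def mod_hom_axioms_def
  proof (intro conjI)
    show "T \<in> module_hom class_ring V V"
      unfolding module_hom_def T_def using M
      by (auto simp: mult_add_distrib_mat_vec mult_mat_vec)
  qed (rule vec_vs vec_module)+
  interpret lm: linear_map class_ring V V T by (rule lm)
  have mh: "mod_hom class_ring V V T" using lm unfolding linear_map_def by auto
  have im1: "lm.imT = T ` carrier_vec n" using mod_hom.im_def[OF mh] by simp
  have imT: "lm.imT = col_space M"
  proof -
    have "T ` carrier_vec n = col_space M" unfolding col_space_eq[OF M] T_def using M by auto
    then show ?thesis using im1 by simp
  qed
  have kerT: "lm.kerT = mat_kernel M"
    using mod_hom.ker_def[OF mh] unfolding mat_kernel[OF M] T_def using M by auto
  interpret K: kernel n n M by (unfold_locales, rule M)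
  have rn: "vectorspace.dim class_ring (V\<lparr>carrier := col_space M\<rparr>) + kernel_dim M = n"
    using lm.rank_nullity[OF fin_dim] unfolding imT kerT dim_is_n K.kernel_dim .
  have sub: "subspace class_ring (col_space M) V" using lm.imT_is_subspace unfolding imT .
  have vsIM: "vectorspace class_ring (V\<lparr>carrier := col_space M\<rparr>)"
    by (rule subspace_is_vs[OF sub])
  have fdIM: "vectorspace.fin_dim class_ring (V\<lparr>carrier := col_space M\<rparr>)"
    using fin_dim_span_cols[OF M] unfolding col_space_def .
  have subm: "submodule class_ring (col_space M) V" using sub unfolding subspace_def by auto
  have YIM: "Y \<subseteq> col_space M"
    unfolding col_space_eq[OF M] Y_def using M img fI by force
  have liIM: "\<not> module.lin_dep class_ring (V\<lparr>carrier := col_space M\<rparr>) Y"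
    using span_li_not_depend(2)[OF YIM subm] liY by simp
  have basis: "vectorspace.basis class_ring (V\<lparr>carrier := col_space M\<rparr>) Y"
    by (rule vectorspace.dim_li_is_basis[OF vsIM fdIM finY], insert YIM liIM rn card cardY, auto)
  then have "module.span class_ring (V\<lparr>carrier := col_space M\<rparr>) Y = col_space M"
    using vectorspace.basis_def[OF vsIM] by auto
  then have spanY: "span Y = col_space M" using span_li_not_depend(1)[OF YIM subm] by simp
  have "M *\<^sub>v z \<in> col_space M" unfolding col_space_eq[OF M] using M z by auto
  then have "M *\<^sub>v z \<in> span Y" using spanY by simp
  then obtain a where "M *\<^sub>v z = lincomb a Y" using finite_span[OF finY Yc] by auto
  then show ?thesis using lc by auto
qed
lemma bil_zero1:
  assumes B: "bilinear_on n B" and x: "x \<in> carrier_vec n"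
  shows "B (0\<^sub>v n) x = 0"
proof -
  have "B ((0::'a::field) \<cdot>\<^sub>v 0\<^sub>v n) x = 0 * B (0\<^sub>v n) x"
    using B x unfolding bilinear_on_def by (meson zero_carrier_vec)
  moreover have "(0::'a) \<cdot>\<^sub>v 0\<^sub>v n = 0\<^sub>v n" by auto
  ultimately show ?thesis by simp
qed

lemma bil_zero2:
  assumes B: "bilinear_on n B" and x: "x \<in> carrier_vec n"
  shows "B x (0\<^sub>v n) = 0"
proof -
  have "B x ((0::'a::field) \<cdot>\<^sub>v 0\<^sub>v n) = 0 * B x (0\<^sub>v n)"
    using B x unfolding bilinear_on_def by (meson zero_carrier_vec)
  moreover have "(0::'a) \<cdot>\<^sub>v 0\<^sub>v n = 0\<^sub>v n" by auto
  ultimately show ?thesis by simp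
qed

lemma bil_finsum2:
  fixes f :: "'i \<Rightarrow> 'a::field vec"
  assumes B: "bilinear_on n B" and u: "u \<in> carrier_vec n" and I: "finite I"
    and f: "\<And>i. i \<in> I \<Longrightarrow> f i \<in> carrier_vec n"
  shows "B u (finsum (module_vec TYPE('a) n) (\<lambda>i. c i \<cdot>\<^sub>v f i) I) = (\<Sum>i\<in>I. c i * B u (f i))"
  using I f
proof (induction I rule: finite_induct)
  case empty
  interpret vec_space "TYPE('a)" n .
  show ?case using bil_zero2[OF B u] by simp
next
  case (insert x F)
  interpret vec_space "TYPE('a)" n .
  have fF: "(\<lambda>i. c i \<cdot>\<^sub>v f i) \<in> F \<rightarrow> carrier_vec n" using insert.prems by auto
  have fx: "c x \<cdot>\<^sub>v f x \<in> carrier_vec n" using insert.prems by auto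
  have S: "finsum V (\<lambda>i. c i \<cdot>\<^sub>v f i) F \<in> carrier_vec n" using fF by (rule finsum_closed)
  have "finsum V (\<lambda>i. c i \<cdot>\<^sub>v f i) (insert x F) = c x \<cdot>\<^sub>v f x + finsum V (\<lambda>i. c i \<cdot>\<^sub>v f i) F"
    by (rule finsum_insert[OF insert.hyps(1) insert.hyps(2) fF fx])
  then have "B u (finsum V (\<lambda>i. c i \<cdot>\<^sub>v f i) (insert x F)) = B u (c x \<cdot>\<^sub>v f x) + B u (finsum V (\<lambda>i. c i \<cdot>\<^sub>v f i) F)"
    using B u fx S unfolding bilinear_on_def by simp
  also have "B u (c x \<cdot>\<^sub>v f x) = c x * B u (f x)" using B u insert.prems unfolding bilinear_on_def by simp
  also have "B u (finsum V (\<lambda>i. c i \<cdot>\<^sub>v f i) F) = (\<Sum>i\<in>F. c i * B u (f i))"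
    using insert.IH insert.prems by simp
  finally show ?case using insert.hyps by simp
qed

lemma finsum_zero_coeffs:
  fixes f :: "'i \<Rightarrow> 'a::field vec"
  assumes f: "\<And>i. i \<in> I \<Longrightarrow> f i \<in> carrier_vec n" and c: "\<And>i. i \<in> I \<Longrightarrow> c i = 0"
  shows "finsum (module_vec TYPE('a) n) (\<lambda>i. c i \<cdot>\<^sub>v f i) I = 0\<^sub>v n"
proof -
  interpret vec_space "TYPE('a)" n .
  show ?thesis by (rule finsum_all0) (use f c in auto)
qed

lemma triangular:
  fixes c :: "nat \<Rightarrow> 'a::field"
  assumes "\<And>v. (\<Sum>e<L. c e * of_nat (v choose e)) = 0"
  shows "e < L \<Longrightarrow> c e = 0"
proof (induction e rule: less_induct)
  case (less e)
  have "(\<Sum>e'<L. c e' * of_nat (e choose e')) = (\<Sum>e'<L. if e' = e then c e else 0)"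
  proof (rule sum.cong)
    fix e' assume "e' \<in> {..<L}"
    show "c e' * of_nat (e choose e') = (if e' = e then c e else 0)"
      using less.IH[of e'] \<open>e' \<in> {..<L}\<close> by (cases "e' < e") (auto simp: binomial_eq_0)
  qed simp
  also have "\<dots> = c e" using less.prems by simp
  finally show ?case using assms[of e] by simp
qed

lemma pow_mat_add:
  fixes A :: "'a::semiring_1 mat"
  assumes A: "A \<in> carrier_mat n n"
  shows "A ^\<^sub>m (a + b) = A ^\<^sub>m a * A ^\<^sub>m b"
proof (induction b)
  case 0 then show ?case using A by simp
next
  case (Suc b)
  have "A ^\<^sub>m (a + Suc b) = A ^\<^sub>m a * A ^\<^sub>m b * A" using Suc by simp
  also have "\<dots> = A ^\<^sub>m a * (A ^\<^sub>m b * A)"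
    by (rule assoc_mult_mat[OF pow_carrier_mat[OF A] pow_carrier_mat[OF A] A])
  finally show ?case by simp
qed

lemma char_matrix_0: "A \<in> carrier_mat n n \<Longrightarrow> char_matrix A (0::'a::field) = A"
  unfolding char_matrix_def by (intro eq_matI) auto

locale setting =
  fixes nn n \<kappa> \<sigma> :: nat
    and B :: "'k::field vec \<Rightarrow> 'k vec \<Rightarrow> 'k"
    and Q :: "'k vec \<Rightarrow> 'k"
    and g :: "'k mat"
    and p :: "nat \<Rightarrow> nat"
    and n_as :: "(nat \<times> 'k) list"
    and w :: "nat \<Rightarrow> int \<Rightarrow> 'k vec"
  assumes Bbil: "bilinear_on nn B"
    and cases: "((\<forall>x\<in>carrier_vec nn. Q x = 0) \<and> (\<forall>x\<in>carrier_vec nn. B x x = 0)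
                   \<and> perp_space nn B = {0\<^sub>v nn})
              \<or> ((\<exists>x\<in>carrier_vec nn. Q x \<noteq> 0)
                   \<and> (\<forall>x\<in>carrier_vec nn. \<forall>y\<in>carrier_vec nn. B x y = Q (x + y) - Q x - Q y)
                   \<and> inj_on Q (perp_space nn B))"
    and kappa: "\<kappa> \<in> {0, 1}"
    and nn_def: "nn = 2 * n + \<kappa>"
    and Q0_or_char2: "(\<forall>x\<in>carrier_vec nn. Q x = 0) \<or> (2::'k) = 0"
    and p_mono: "\<And>t s. 1 \<le> t \<Longrightarrow> t \<le> s \<Longrightarrow> s \<le> \<sigma> \<Longrightarrow> p s \<le> p t"
    and p_pos: "\<And>t. t \<in> {1..\<sigma>} \<Longrightarrow> p t \<ge> 1"
    and p_sum: "(\<Sum>t=1..\<sigma>. p t) = n"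
    and g_Is: "g \<in> isometry_group nn B Q"
    and g_unip: "unipotent nn g"
    and jnf: "jordan_nf (g - 1\<^sub>m nn) n_as"
    and blocks: "mset (map fst n_as) =
                   image_mset (\<lambda>t. 2 * p t) (mset_set {1..\<sigma>}) + (if \<kappa> = 1 then {#1#} else {#})"
    and adapt: "adapted nn B Q g \<kappa> \<sigma> p w"
begin

lemma g_car: "g \<in> carrier_mat nn nn" using g_Is by (simp add: isometry_group_def)

abbreviation N where "N \<equiv> g - 1\<^sub>m nn"

lemma N_car: "N \<in> carrier_mat nn nn" using g_car by (metis minus_carrier_mat one_carrier_mat)

lemma w_car: "t \<in> {1..\<sigma>+\<kappa>} \<Longrightarrow> w t i \<in> carrier_vec nn"
  using adapt unfolding adapted_def by blast

lemma w_sh: "t \<in> {1..\<sigma>+\<kappa>} \<Longrightarrow> w t (i + 1) = g *\<^sub>v w t i"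
  using adapt unfolding adapted_def by blast

lemma ad_b1: "t \<in> {1..\<sigma>} \<Longrightarrow> \<bar>i - j\<bar> < int (p t) \<Longrightarrow> B (w t i) (w t j) = 0"
  using adapt unfolding adapted_def by blast

lemma ad_b2: "t \<in> {1..\<sigma>} \<Longrightarrow> j - i = int (p t) \<Longrightarrow> B (w t i) (w t j) = 1"
  using adapt unfolding adapted_def by blast

lemma ad_c: "1 \<le> t \<Longrightarrow> t < r \<Longrightarrow> r \<le> \<sigma> \<Longrightarrow> 0 \<le> i - j + int (p r) \<Longrightarrow> i - j + int (p r) < 2 * int (p t)
     \<Longrightarrow> B (w t i) (w r j) = 0"
  using adapt unfolding adapted_def by blast

lemma ad_e: "\<kappa> = 1 \<Longrightarrow> t \<in> {1..\<sigma>} \<Longrightarrow> 0 \<le> i - j \<Longrightarrow> i - j < 2 * int (p t) \<Longrightarrow> B (w t i) (w (\<sigma>+1) j) = 0"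
  using adapt unfolding adapted_def by blast

lemma Bsym0:
  assumes x: "x \<in> carrier_vec nn" and y: "y \<in> carrier_vec nn" and b: "B x y = 0"
  shows "B y x = 0"
  using cases
proof
  assume c1: "(\<forall>x\<in>carrier_vec nn. Q x = 0) \<and> (\<forall>x\<in>carrier_vec nn. B x x = 0) \<and> perp_space nn B = {0\<^sub>v nn}"
  have xy: "x + y \<in> carrier_vec nn" using x y by simp
  have "B (x + y) (x + y) = B x (x + y) + B y (x + y)" using Bbil x y xy unfolding bilinear_on_def by blast
  also have "\<dots> = B x x + B x y + (B y x + B y y)" using Bbil x y unfolding bilinear_on_def by simp
  finally have "0 = B x x + B x y + (B y x + B y y)" using c1 xy by simp
  then show ?thesis using c1 x y b by simp
next
  assume c2: "(\<exists>x\<in>carrier_vec nn. Q x \<noteq> 0) \<and> (\<forall>x\<in>carrier_vec nn. \<forall>y\<in>carrier_vec nn. B x y = Q (x + y) - Q x - Q y) \<and> inj_on Q (perp_space nn B)"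
  then have "B y x = Q (y + x) - Q y - Q x" "B x y = Q (x + y) - Q x - Q y" using x y by auto
  moreover have "y + x = x + y" using comm_add_vec[OF y x] .
  ultimately have "B y x = Q (x + y) - Q y - Q x" "B x y = Q (x + y) - Q x - Q y" by simp_all
  moreover have "Q (x + y) - Q y - Q x = Q (x + y) - Q x - Q y" by (simp add: algebra_simps)
  ultimately show ?thesis using b by simp
qed

definition ksz :: "nat \<Rightarrow> nat" where "ksz t = (if t \<le> \<sigma> then 2 * p t else 1)"

definition Kill :: "nat \<Rightarrow> bool" where "Kill t \<longleftrightarrow> (\<forall>b. (N ^\<^sub>m ksz t) *\<^sub>v w t b = 0\<^sub>v nn)"

lemma Ndlt: assumes t: "t \<in> {1..\<sigma>+\<kappa>}" shows "(N ^\<^sub>m a) *\<^sub>v w t m = (dlt ^^ a) (w t) m"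
  by (rule Npow_dlt[where w = "w t", OF g_car w_car[OF t] w_sh[OF t]])

lemma dlt_B2_zero:
  assumes t: "t \<in> {1..\<sigma>+\<kappa>}" and u: "u \<in> carrier_vec nn" and K: "\<And>b. (N ^\<^sub>m a) *\<^sub>v w t b = 0\<^sub>v nn"
  shows "(dlt ^^ a) (\<lambda>j. B u (w t j)) m = 0"
proof -
  have "(dlt ^^ a) (\<lambda>j. B u (w t j)) m = B u ((dlt ^^ a) (w t) m)"
    by (rule bil_dltpow2[OF Bbil u w_car[OF t], symmetric])
  also have "\<dots> = B u (0\<^sub>v nn)" using K[of m] Ndlt[OF t] by simp
  finally show ?thesis using bil_zero2[OF Bbil u] by simp
qed

lemma dlt_B1_zero:
  assumes t: "t \<in> {1..\<sigma>+\<kappa>}" and u: "u \<in> carrier_vec nn" and K: "\<And>b. (N ^\<^sub>m a) *\<^sub>v w t b = 0\<^sub>v nn"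
  shows "(dlt ^^ a) (\<lambda>j. B (w t j) u) m = 0"
proof -
  have "(dlt ^^ a) (\<lambda>j. B (w t j) u) m = B ((dlt ^^ a) (w t) m) u"
    by (rule bil_dltpow1[OF Bbil u w_car[OF t], symmetric])
  also have "\<dots> = B (0\<^sub>v nn) u" using K[of m] Ndlt[OF t] by simp
  finally show ?thesis using bil_zero1[OF Bbil u] by simp
qed

lemma stageA:
  assumes s: "s \<in> {1..\<sigma>}" and K: "Kill s"
  shows "B (w s i) (w s j) = of_int (Cz ((j - i) + (int (p s) - 1)) (2 * p s - 1))"
proof -
  have s': "s \<in> {1..\<sigma>+\<kappa>}" using s by auto
  have ps: "p s \<ge> 1" using p_pos[OF s] .
  define f where "f = (\<lambda>j. B (w s i) (w s j) - of_int (Cz (j + (int (p s) - 1 - i)) (2 * p s - 1)))"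
  have K': "\<And>b. (N ^\<^sub>m (2 * p s)) *\<^sub>v w s b = 0\<^sub>v nn" using K s unfolding Kill_def ksz_def by auto
  have "f j = 0"
  proof (rule dlt_unique[of "2 * p s" f "i - int (p s) + 1" j])
    fix m
    have "(dlt ^^ (2 * p s)) f m = (dlt ^^ (2 * p s)) (\<lambda>j. B (w s i) (w s j)) m
        - (dlt ^^ (2 * p s)) (\<lambda>j. (of_int (Cz (j + (int (p s) - 1 - i)) (2 * p s - 1)) :: 'k)) m"
      unfolding f_def dltpow_diff ..
    also have "(dlt ^^ (2 * p s)) (\<lambda>j. B (w s i) (w s j)) m = 0"
      by (rule dlt_B2_zero[OF s' w_car[OF s'] K'])
    also have "(dlt ^^ (2 * p s)) (\<lambda>j. (of_int (Cz (j + (int (p s) - 1 - i)) (2 * p s - 1)) :: 'k)) m = 0"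
    proof -
      have e: "Suc (2 * p s - 1) = 2 * p s" using ps by simp
      have "(dlt ^^ Suc (2 * p s - 1)) (\<lambda>m. Cz (m + (int (p s) - 1 - i)) (2 * p s - 1)) = (\<lambda>m. 0)"
        by (rule dltpow_Cz_zero)
      then show ?thesis unfolding dltpow_of_int e by simp
    qed
    finally show "(dlt ^^ (2 * p s)) f m = 0" by simp
  next
    fix idx assume idx: "idx < 2 * p s"
    define j where "j = i - int (p s) + 1 + int idx"
    have cz: "Cz (j + (int (p s) - 1 - i)) (2 * p s - 1) =
       (if \<bar>j - i\<bar> \<ge> int (p s) then sg (j - i) * int ((nat \<bar>j - i\<bar> + p s - 1) choose (nat \<bar>j - i\<bar> - p s)) else 0)"
      using Cz_psi[OF ps, of "j - i"] by (simp add: algebra_simps)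
    show "f (i - int (p s) + 1 + int idx) = 0"
    proof (cases "idx = 2 * p s - 1")
      case True
      then have ji: "j - i = int (p s)" using ps j_def by simp
      have "B (w s i) (w s j) = 1" by (rule ad_b2[OF s ji])
      moreover have "Cz (j + (int (p s) - 1 - i)) (2 * p s - 1) = 1" using cz ji ps by (simp add: sg_def)
      ultimately show ?thesis unfolding f_def j_def by simp
    next
      case False
      then have ji: "\<bar>i - j\<bar> < int (p s)" using idx j_def by simp
      have "B (w s i) (w s j) = 0" by (rule ad_b1[OF s ji])
      moreover have "\<not> \<bar>j - i\<bar> \<ge> int (p s)" using ji by linarith
      then have "Cz (j + (int (p s) - 1 - i)) (2 * p s - 1) = 0" using cz by simp
      ultimately show ?thesis unfolding f_def j_def by simp
    qed
  qed
  then show ?thesis unfolding f_def by (simp add: algebra_simps)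
qed

end

context setting begin

lemma Kill_ex: "s \<in> {1..\<sigma>} \<Longrightarrow> Kill s \<Longrightarrow> (N ^\<^sub>m (2 * p s)) *\<^sub>v w s b = 0\<^sub>v nn"
  unfolding Kill_def ksz_def by auto

lemma stageC:
  assumes s: "s \<in> {1..\<sigma>}" and K: "Kill s" and sr: "s < r" and r: "r \<le> \<sigma>"
  shows "B (w s i) (w r j) = 0"
proof -
  have s': "s \<in> {1..\<sigma>+\<kappa>}" using s by auto
  have r': "r \<in> {1..\<sigma>+\<kappa>}" using s sr r by auto
  define f where "f = (\<lambda>i. B (w s i) (w r j))"
  have "f i = 0"
  proof (rule dlt_unique[of "2 * p s" f "j - int (p r)" i])
    fix m show "(dlt ^^ (2 * p s)) f m = 0" unfolding f_def
      by (rule dlt_B1_zero[OF s' w_car[OF r'] Kill_ex[OF s K]])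
  next
    fix idx assume "idx < 2 * p s"
    then show "f (j - int (p r) + int idx) = 0" unfolding f_def
      using s sr r by (intro ad_c) auto
  qed
  then show ?thesis unfolding f_def .
qed

lemma stageK:
  assumes s: "s \<in> {1..\<sigma>}" and K: "Kill s" and k: "\<kappa> = 1"
  shows "B (w s i) (w (\<sigma>+1) j) = 0"
proof -
  have s': "s \<in> {1..\<sigma>+\<kappa>}" using s by auto
  have r': "\<sigma>+1 \<in> {1..\<sigma>+\<kappa>}" using k by auto
  define f where "f = (\<lambda>i. B (w s i) (w (\<sigma>+1) j))"
  have "f i = 0"
  proof (rule dlt_unique[of "2 * p s" f "j" i])
    fix m show "(dlt ^^ (2 * p s)) f m = 0" unfolding f_def
      by (rule dlt_B1_zero[OF s' w_car[OF r'] Kill_ex[OF s K]])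
  next
    fix idx assume "idx < 2 * p s"
    then show "f (j + int idx) = 0" unfolding f_def
      using s k by (intro ad_e) auto
  qed
  then show ?thesis unfolding f_def .
qed

lemma cross:
  assumes s: "s \<in> {1..\<sigma>}" and K: "Kill s" and sr: "s < r" and r: "r \<in> {1..\<sigma>+\<kappa>}"
  shows "B (w s i) (w r j) = 0" "B (w r j) (w s i) = 0"
proof -
  show 1: "B (w s i) (w r j) = 0"
  proof (cases "r \<le> \<sigma>")
    case True then show ?thesis using stageC[OF s K sr] by simp
  next
    case False
    then have "\<kappa> = 1" "r = \<sigma> + 1" using r kappa by auto
    then show ?thesis using stageK[OF s K] by simp
  qed
  show "B (w r j) (w s i) = 0"
    by (rule Bsym0[OF w_car w_car 1]) (use s r in auto)
qed

lemma kernel_dim_zero: "kernel_dim (0\<^sub>m m m :: 'a::field mat) = m"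
proof -
  interpret K: kernel m m "0\<^sub>m m m :: 'a mat" by unfold_locales auto
  have mk: "mat_kernel (0\<^sub>m m m :: 'a mat) = carrier_vec m" by (auto simp: mat_kernel_def)
  have "K.dim = vectorspace.dim class_ring (module_vec TYPE('a) m\<lparr>carrier := carrier_vec m\<rparr>)"
    unfolding mk ..
  also have "module_vec TYPE('a) m\<lparr>carrier := carrier_vec m\<rparr> = module_vec TYPE('a) m"
    using K.NC.carrier_vs_is_self by simp
  finally show ?thesis using K.NC.dim_is_n by simp
qed

lemma all_blocks_zero: "\<forall>x\<in>set n_as. snd x = 0"
proof (rule ccontr)
  assume "\<not> ?thesis"
  then obtain d e where de: "(d, e) \<in> set n_as" "e \<noteq> 0" by auto
  from g_unip obtain m where m: "N ^\<^sub>m m = 0\<^sub>m nn nn" unfolding unipotent_def by auto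
  have "nn = kernel_dim (N ^\<^sub>m m)" unfolding m kernel_dim_zero ..
  also have "\<dots> = dim_gen_eigenspace N 0 m"
    unfolding dim_gen_eigenspace_def char_matrix_0[OF N_car] ..
  also have "\<dots> = sum_list (map (min m) (map fst (filter (\<lambda>(n, e). e = 0) n_as)))"
    by (rule dim_gen_eigenspace[OF jnf])
  also have "\<dots> \<le> sum_list (map fst (filter (\<lambda>(n, e). e = 0) n_as))"
    by (induction n_as) auto
  finally have le: "nn \<le> sum_list (map fst (filter (\<lambda>(n, e). e = 0) n_as))" .
  have tot: "sum_list (map fst n_as) = nn"
  proof -
    have "sum_list (map fst n_as) = sum_mset (mset (map fst n_as))" by (metis sum_mset_sum_list)
    also have "\<dots> = (\<Sum>t\<in>{1..\<sigma>}. 2 * p t) + \<kappa>"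
      unfolding blocks using kappa by (auto simp: sum_unfold_sum_mset)
    also have "\<dots> = nn" using p_sum nn_def by (simp add: sum_distrib_left[symmetric])
    finally show ?thesis .
  qed
  have split: "sum_list (map fst n_as) = sum_list (map fst (filter (\<lambda>(n, e). e = 0) n_as))
     + sum_list (map fst (filter (\<lambda>x. \<not> (\<lambda>(n, e). e = 0) x) n_as))"
    by (induction n_as) auto
  have "d \<le> sum_list (map fst (filter (\<lambda>x. \<not> (\<lambda>(n, e). e = 0) x) n_as))"
    using de by (intro member_le_sum_list) (force, simp)
  moreover have "d > 0" using jnf de unfolding jordan_nf_def by force
  ultimately show False using le tot split by linarith
qed

lemma kdim:
  assumes k: "k \<ge> 1"
  shows "kernel_dim (N ^\<^sub>m k) = (\<Sum>t\<in>{1..\<sigma>}. min k (2 * p t)) + \<kappa>"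
proof -
  have "kernel_dim (N ^\<^sub>m k) = dim_gen_eigenspace N 0 k"
    unfolding dim_gen_eigenspace_def char_matrix_0[OF N_car] ..
  also have "\<dots> = sum_list (map (min k) (map fst (filter (\<lambda>(n, e). e = 0) n_as)))"
    by (rule dim_gen_eigenspace[OF jnf])
  also have "filter (\<lambda>(n, e). e = 0) n_as = n_as"
    using all_blocks_zero by (intro filter_True) auto
  also have "sum_list (map (min k) (map fst n_as)) = sum_mset (image_mset (min k) (mset (map fst n_as)))"
    by (metis mset_map sum_mset_sum_list)
  also have "\<dots> = (\<Sum>t\<in>{1..\<sigma>}. min k (2 * p t)) + \<kappa>"
    unfolding blocks using k kappa by (auto simp: sum_unfold_sum_mset image_mset.compositionality o_def)
  finally show ?thesis .
qed

end

lemma dltpow_zero: "(dlt ^^ a) (\<lambda>_. (0::'a::ab_group_add)) = (\<lambda>_. 0)"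
  by (induction a) (auto simp: dlt_def)

context setting begin

lemma Kill_all: "t \<in> {1..\<sigma>+\<kappa>} \<Longrightarrow> Kill t"
proof (induction t rule: less_induct)
  case (less t)
  have kap: "\<kappa> \<le> 1" using kappa by auto
  have sS: "s \<in> {1..\<sigma>}" if "s \<in> {1..<t}" for s using that less.prems kap by auto
  have IH: "Kill s" if "s \<in> {1..<t}" for s using less.IH[of s] that less.prems by auto
  define k where "k = ksz t"
  have k1: "k \<ge> 1" using p_pos[of t] less.prems unfolding k_def ksz_def by auto
  have kle: "k \<le> 2 * p s" if "s \<in> {1..<t}" for s
  proof (cases "t \<le> \<sigma>")
    case True then show ?thesis using p_mono[of s t] that unfolding k_def ksz_def by auto
  next
    case False then show ?thesis using p_pos[OF sS[OF that]] unfolding k_def ksz_def by auto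
  qed
  have kge: "2 * p s \<le> k" if "s \<in> {1..\<sigma>}" "t \<le> s" for s
    using p_mono[of t s] that less.prems unfolding k_def ksz_def by auto
  define I where "I = Sigma {1..<t} (\<lambda>s. {..<2 * p s - k})"
  define f where "f = (\<lambda>(s, e). (N ^\<^sub>m (2 * p s - 1 - e)) *\<^sub>v w s 0)"
  have finI: "finite I" unfolding I_def by auto
  have sR: "s \<in> {1..\<sigma>+\<kappa>}" if "s \<in> {1..<t}" for s using sS[OF that] by auto
  have fcar: "f i \<in> carrier_vec nn" if i: "i \<in> I" for i
  proof -
    obtain s e where ise: "i = (s, e)" by force
    have s: "s \<in> {1..<t}" using i ise unfolding I_def by auto
    have "f i = N ^\<^sub>m (2 * p s - 1 - e) *\<^sub>v w s 0" unfolding ise f_def by simp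
    then show ?thesis using mult_mat_vec_carrier[OF pow_carrier_mat[OF N_car] w_car[OF sR[OF s]]] by simp
  qed
  have fdlt: "f (s, e) = (dlt ^^ (2 * p s - 1 - e)) (w s) 0" if "s \<in> {1..<t}" for s e
    unfolding f_def using Ndlt[OF sR[OF that]] by simp
  have Bf: "B (w s (int (p s) - 1 - int v)) (f (s', e)) = (if s' = s then of_nat (v choose e) else 0)"
    if s: "s \<in> {1..<t}" and se: "(s', e) \<in> I" for s s' e v
  proof -
    have s': "s' \<in> {1..<t}" and e: "e < 2 * p s' - k" using se unfolding I_def by auto
    define j where "j = int (p s) - 1 - int v"
    have "B (w s j) (f (s', e)) = (dlt ^^ (2 * p s' - 1 - e)) (\<lambda>m. B (w s j) (w s' m)) 0"
      unfolding fdlt[OF s'] by (rule bil_dltpow2[OF Bbil w_car[OF sR[OF s]] w_car[OF sR[OF s']]])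
    also have "\<dots> = (if s' = s then of_nat (v choose e) else 0)"
    proof (cases "s' = s")
      case True
      have "(\<lambda>m. B (w s j) (w s' m)) = (\<lambda>m. of_int (Cz (m + int v) (e + (2 * p s' - 1 - e))))"
      proof (rule ext)
        fix m
        have "B (w s j) (w s m) = of_int (Cz ((m - j) + (int (p s) - 1)) (2 * p s - 1))"
          by (rule stageA[OF sS[OF s] IH[OF s]])
        moreover have "(m - j) + (int (p s) - 1) = m + int v" unfolding j_def by simp
        moreover have "e + (2 * p s' - 1 - e) = 2 * p s - 1" using e True k1 by simp
        ultimately show "B (w s j) (w s' m) = of_int (Cz (m + int v) (e + (2 * p s' - 1 - e)))"
          using True by simp
      qed
      then have "(dlt ^^ (2 * p s' - 1 - e)) (\<lambda>m. B (w s j) (w s' m)) 0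
         = (dlt ^^ (2 * p s' - 1 - e)) (\<lambda>m. of_int (Cz (m + int v) (e + (2 * p s' - 1 - e)))) 0"
        by (simp only:)
      also have "\<dots> = of_int ((dlt ^^ (2 * p s' - 1 - e)) (\<lambda>m. Cz (m + int v) (e + (2 * p s' - 1 - e))) 0)"
        by (simp only: dltpow_of_int)
      also have "\<dots> = of_int (Cz (0 + int v) e)" by (simp only: dltpow_Cz)
      finally have "(dlt ^^ (2 * p s' - 1 - e)) (\<lambda>m. B (w s j) (w s' m)) 0 = of_int (Cz (0 + int v) e)" .
      then show ?thesis using True by (simp add: Cz_def)
    next
      case False
      have "(\<lambda>m. B (w s j) (w s' m)) = (\<lambda>_. 0)"
      proof (rule ext)
        fix m
        show "B (w s j) (w s' m) = 0"
        proof (cases "s < s'")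
          case True then show ?thesis using cross(1)[OF sS[OF s] IH[OF s] True sR[OF s']] by simp
        next
          case False
          then have "s' < s" using \<open>s' \<noteq> s\<close> by simp
          then show ?thesis using cross(2)[OF sS[OF s'] IH[OF s'] _ sR[OF s]] by simp
        qed
      qed
      then show ?thesis using False by (simp add: dltpow_zero)
    qed
    finally show ?thesis unfolding j_def .
  qed
  have pair: "B (w s (int (p s) - 1 - int v)) (finsum (module_vec TYPE('k) nn) (\<lambda>i. c i \<cdot>\<^sub>v f i) I)
      = (\<Sum>e<2 * p s - k. c (s, e) * of_nat (v choose e))" if s: "s \<in> {1..<t}" for c s v
  proof -
    have "B (w s (int (p s) - 1 - int v)) (finsum (module_vec TYPE('k) nn) (\<lambda>i. c i \<cdot>\<^sub>v f i) I)
        = (\<Sum>i\<in>I. c i * B (w s (int (p s) - 1 - int v)) (f i))"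
      by (rule bil_finsum2[OF Bbil w_car[OF sR[OF s]] finI fcar])
    also have "\<dots> = (\<Sum>(s', e)\<in>I. c (s', e) * (if s' = s then of_nat (v choose e) else 0))"
      by (rule sum.cong) (auto simp: Bf[OF s] split: prod.splits)
    also have "\<dots> = (\<Sum>s'\<in>{1..<t}. \<Sum>e\<in>{..<2 * p s' - k}. c (s', e) * (if s' = s then of_nat (v choose e) else 0))"
      unfolding I_def by (subst sum.Sigma) auto
    also have "\<dots> = (\<Sum>s'\<in>{1..<t}. if s' = s then (\<Sum>e\<in>{..<2 * p s - k}. c (s, e) * of_nat (v choose e)) else 0)"
      by (rule sum.cong) auto
    also have "\<dots> = (\<Sum>e<2 * p s - k. c (s, e) * of_nat (v choose e))"
      using s by simp
    finally show ?thesis .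
  qed
  have tri: "\<forall>i\<in>I. c i = 0"
    if h: "\<And>s v. s \<in> {1..<t} \<Longrightarrow> B (w s (int (p s) - 1 - int v)) (finsum (module_vec TYPE('k) nn) (\<lambda>i. c i \<cdot>\<^sub>v f i) I) = 0"
    for c
  proof
    fix i assume i: "i \<in> I"
    obtain s e where ise: "i = (s, e)" by force
    have s: "s \<in> {1..<t}" and e: "e < 2 * p s - k" using i ise unfolding I_def by auto
    have "c (s, e) = 0"
      by (rule triangular[where c = "\<lambda>e. c (s, e)", OF _ e]) (use pair[OF s] h[OF s] in simp)
    then show "c i = 0" using ise by simp
  qed
  have indep: "\<forall>i\<in>I. c i = 0" if z: "finsum (module_vec TYPE('k) nn) (\<lambda>i. c i \<cdot>\<^sub>v f i) I = 0\<^sub>v nn" for c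
    by (rule tri) (use z bil_zero2[OF Bbil w_car[OF sR]] in auto)
  have img: "\<exists>z\<in>carrier_vec nn. f i = (N ^\<^sub>m k) *\<^sub>v z" if i: "i \<in> I" for i
  proof -
    obtain s e where ise: "i = (s, e)" by force
    have s: "s \<in> {1..<t}" and e: "e < 2 * p s - k" using i ise unfolding I_def by auto
    have a: "2 * p s - 1 - e = k + (2 * p s - 1 - e - k)" using e by simp
    have "f i = (N ^\<^sub>m k * N ^\<^sub>m (2 * p s - 1 - e - k)) *\<^sub>v w s 0"
      unfolding ise f_def using pow_mat_add[OF N_car, of k] a by (metis case_prod_conv)
    also have "\<dots> = (N ^\<^sub>m k) *\<^sub>v (N ^\<^sub>m (2 * p s - 1 - e - k) *\<^sub>v w s 0)"
      by (rule assoc_mult_mat_vec[OF pow_carrier_mat[OF N_car] pow_carrier_mat[OF N_car] w_car[OF sR[OF s]]])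
    finally show ?thesis
      using mult_mat_vec_carrier[OF pow_carrier_mat[OF N_car] w_car[OF sR[OF s]]] by blast
  qed
  have card: "nn \<le> card I + kernel_dim (N ^\<^sub>m k)"
  proof -
    have cI: "card I = (\<Sum>s\<in>{1..<t}. 2 * p s - k)" unfolding I_def by (subst card_SigmaI) auto
    have tle: "t \<le> \<sigma> + 1" using less.prems kap by auto
    have "(\<Sum>s\<in>{1..\<sigma>}. 2 * p s) = (\<Sum>s\<in>{1..\<sigma>}. (if s < t then 2 * p s - k else 0) + min k (2 * p s))"
    proof (rule sum.cong[OF refl])
      fix s assume s: "s \<in> {1..\<sigma>}"
      show "2 * p s = (if s < t then 2 * p s - k else 0) + min k (2 * p s)"
      proof (cases "s < t")
        case True then show ?thesis using kle[of s] s by auto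
      next
        case False then show ?thesis using kge[OF s] by auto
      qed
    qed
    also have "\<dots> = (\<Sum>s\<in>{1..\<sigma>}. if s < t then 2 * p s - k else 0) + (\<Sum>s\<in>{1..\<sigma>}. min k (2 * p s))"
      by (rule sum.distrib)
    also have "(\<Sum>s\<in>{1..\<sigma>}. if s < t then 2 * p s - k else 0) = (\<Sum>s\<in>{1..\<sigma>} \<inter> {s. s < t}. 2 * p s - k)"
      by (simp add: sum.inter_restrict)
    also have "{1..\<sigma>} \<inter> {s. s < t} = {1..<t}" using tle by auto
    finally have "(\<Sum>s\<in>{1..\<sigma>}. 2 * p s) = card I + (\<Sum>s\<in>{1..\<sigma>}. min k (2 * p s))" using cI by simp
    moreover have "nn = (\<Sum>s\<in>{1..\<sigma>}. 2 * p s) + \<kappa>" using nn_def p_sum by (simp add: sum_distrib_left[symmetric])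
    ultimately show ?thesis using kdim[OF k1] by simp
  qed
  show "Kill t" unfolding Kill_def k_def[symmetric]
  proof
    fix b
    have tR: "t \<in> {1..\<sigma>+\<kappa>}" by (rule less.prems)
    obtain c where c: "(N ^\<^sub>m k) *\<^sub>v w t b = finsum (module_vec TYPE('k) nn) (\<lambda>i. c i \<cdot>\<^sub>v f i) I"
    proof -
      have fI: "f ` I \<subseteq> carrier_vec nn" using fcar by auto
      show ?thesis using LA[where f = f, OF pow_carrier_mat[OF N_car] finI fI indep img card w_car[OF tR, of b]] that by blast
    qed
    have "\<forall>i\<in>I. c i = 0"
    proof (rule tri)
      fix s v assume s: "s \<in> {1..<t}"
      define u where "u = w s (int (p s) - 1 - int v)"
      have u: "u \<in> carrier_vec nn" unfolding u_def by (rule w_car[OF sR[OF s]])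
      have "B u ((N ^\<^sub>m k) *\<^sub>v w t b) = B u ((dlt ^^ k) (w t) b)" using Ndlt[OF tR] by simp
      also have "\<dots> = (dlt ^^ k) (\<lambda>m. B u (w t m)) b" by (rule bil_dltpow2[OF Bbil u w_car[OF tR]])
      also have "(\<lambda>m. B u (w t m)) = (\<lambda>_. 0)"
        using cross(1)[OF sS[OF s] IH[OF s] _ tR] s unfolding u_def by auto
      finally have "B u ((N ^\<^sub>m k) *\<^sub>v w t b) = 0" by (simp add: dltpow_zero)
      then show "B (w s (int (p s) - 1 - int v)) (finsum (module_vec TYPE('k) nn) (\<lambda>i. c i \<cdot>\<^sub>v f i) I) = 0"
        using c unfolding u_def by simp
    qed
    then have "finsum (module_vec TYPE('k) nn) (\<lambda>i. c i \<cdot>\<^sub>v f i) I = 0\<^sub>v nn"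
      by (intro finsum_zero_coeffs[of I f]) (auto simp: fcar)
    then show "(N ^\<^sub>m k) *\<^sub>v w t b = 0\<^sub>v nn" using c by simp
  qed
qed

end


lemma vec_diff_zero:
  fixes a :: "'a::ab_group_add vec"
  assumes a: "a \<in> carrier_vec n" and b: "b \<in> carrier_vec n" and e: "a - b = 0\<^sub>v n"
  shows "a = b"
proof (rule eq_vecI)
  fix i assume i: "i < dim_vec b"
  have "(a - b) $ i = 0" using e i b by simp
  then show "a $ i = b $ i" using i by simp
qed (use a b in simp)

context setting begin

lemma final_a:
  assumes t: "t \<in> {1..\<sigma>}"
  shows "B (w t i) (w t j) = (if \<bar>j - i\<bar> \<ge> int (p t)
               then of_int (sg (j - i)) * of_nat ((nat \<bar>j - i\<bar> + p t - 1) choose (nat \<bar>j - i\<bar> - p t))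
               else 0)"
proof -
  have K: "Kill t" using Kill_all t by auto
  have "B (w t i) (w t j) = of_int (Cz ((j - i) + (int (p t) - 1)) (2 * p t - 1))"
    by (rule stageA[OF t K])
  also have "\<dots> = of_int (if \<bar>j - i\<bar> \<ge> int (p t) then sg (j - i) * int ((nat \<bar>j - i\<bar> + p t - 1) choose (nat \<bar>j - i\<bar> - p t)) else 0)"
    unfolding Cz_psi[OF p_pos[OF t]] ..
  finally show ?thesis by simp
qed

lemma final_b:
  assumes k: "\<kappa> = 1"
  shows "B (w (\<sigma>+1) i) (w (\<sigma>+1) j) = 0"
proof -
  have r: "\<sigma>+1 \<in> {1..\<sigma>+\<kappa>}" using k by auto
  have K: "Kill (\<sigma>+1)" using Kill_all r by auto
  have N1: "N *\<^sub>v w (\<sigma>+1) b = 0\<^sub>v nn" for b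
  proof -
    have "(N ^\<^sub>m 1) *\<^sub>v w (\<sigma>+1) b = 0\<^sub>v nn" using K unfolding Kill_def ksz_def by auto
    moreover have "N ^\<^sub>m 1 = N" using N_car by simp
    ultimately show ?thesis by simp
  qed
  have st: "w (\<sigma>+1) (b + 1) = w (\<sigma>+1) b" for b
  proof -
    have x: "w (\<sigma>+1) b \<in> carrier_vec nn" by (rule w_car[OF r])
    have "N *\<^sub>v w (\<sigma>+1) b = g *\<^sub>v w (\<sigma>+1) b - w (\<sigma>+1) b"
      using minus_mult_distrib_mat_vec[OF g_car one_carrier_mat x] x by simp
    then have d: "g *\<^sub>v w (\<sigma>+1) b - w (\<sigma>+1) b = 0\<^sub>v nn" using N1 by simp
    have gx: "g *\<^sub>v w (\<sigma>+1) b \<in> carrier_vec nn" using g_car x by simp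
    have "g *\<^sub>v w (\<sigma>+1) b = w (\<sigma>+1) b" by (rule vec_diff_zero[OF gx x d])
    then show ?thesis using w_sh[OF r] by simp
  qed
  have wc: "w (\<sigma>+1) m = w (\<sigma>+1) 0" for m by (rule const_int_fun) (rule st)
  have two: "B (w (\<sigma>+1) 0) (w (\<sigma>+1) 0) = 2" using adapt k unfolding adapted_def by blast
  have "B (w (\<sigma>+1) 0) (w (\<sigma>+1) 0) = 0"
    using Q0_or_char2
  proof
    assume Q0: "\<forall>x\<in>carrier_vec nn. Q x = 0"
    then have "\<forall>x\<in>carrier_vec nn. B x x = 0" using cases by auto
    then show ?thesis using w_car[OF r] by blast
  next
    assume "(2::'k) = 0" then show ?thesis using two by simp
  qed
  then show ?thesis using wc[of i] wc[of j] by simp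
qed

lemma final_c:
  assumes t: "t \<in> {1..\<sigma>+\<kappa>}" and r: "r \<in> {1..\<sigma>+\<kappa>}" and tr: "t \<noteq> r"
  shows "B (w t i) (w r j) = 0"
proof (cases "t < r")
  case True
  then have "t \<in> {1..\<sigma>}" using t r kappa by auto
  then show ?thesis using cross(1)[OF _ _ True r] Kill_all t by blast
next
  case False
  then have rt: "r < t" using tr by simp
  then have "r \<in> {1..\<sigma>}" using t r kappa by auto
  then show ?thesis using cross(2)[OF _ _ rt t] Kill_all r by blast
qed

end

theorem proposition1p6:
  fixes nn n \<kappa> \<sigma> :: nat
    and B :: "'k::alg_closed_field vec \<Rightarrow> 'k vec \<Rightarrow> 'k"
    and Q :: "'k vec \<Rightarrow> 'k"
    and g :: "'k mat"
    and p :: "nat \<Rightarrow> nat"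
    and n_as :: "(nat \<times> 'k) list"
    and w :: "nat \<Rightarrow> int \<Rightarrow> 'k vec"
  assumes dim: "nn \<ge> 3"
    and Bbil: "bilinear_on nn B"
    and Qquad: "quadratic_form_on nn Q"
    and cases: "((\<forall>x\<in>carrier_vec nn. Q x = 0) \<and> (\<forall>x\<in>carrier_vec nn. B x x = 0)
                   \<and> perp_space nn B = {0\<^sub>v nn})
              \<or> ((\<exists>x\<in>carrier_vec nn. Q x \<noteq> 0)
                   \<and> (\<forall>x\<in>carrier_vec nn. \<forall>y\<in>carrier_vec nn. B x y = Q (x + y) - Q x - Q y)
                   \<and> inj_on Q (perp_space nn B))"
    and kappa: "\<kappa> \<in> {0, 1}"
    and nn_def: "nn = 2 * n + \<kappa>"
    and Q0_or_char2: "(\<forall>x\<in>carrier_vec nn. Q x = 0) \<or> (2::'k) = 0"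
    and p_mono: "\<And>t s. 1 \<le> t \<Longrightarrow> t \<le> s \<Longrightarrow> s \<le> \<sigma> \<Longrightarrow> p s \<le> p t"
    and p_pos: "\<And>t. t \<in> {1..\<sigma>} \<Longrightarrow> p t \<ge> 1"
    and p_sum: "(\<Sum>t=1..\<sigma>. p t) = n"
    and g_Is: "g \<in> isometry_group nn B Q"
    and g_unip: "unipotent nn g"
    and jnf: "jordan_nf (g - 1\<^sub>m nn) n_as"
    and blocks: "mset (map fst n_as) =
                   image_mset (\<lambda>t. 2 * p t) (mset_set {1..\<sigma>}) + (if \<kappa> = 1 then {#1#} else {#})"
    and adapt: "adapted nn B Q g \<kappa> \<sigma> p w"
  shows "(\<forall>t\<in>{1..\<sigma>}. \<forall>i j.
            B (w t i) (w t j) =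
              (if \<bar>j - i\<bar> \<ge> int (p t)
               then of_int (sg (j - i)) *
                    of_nat ((nat \<bar>j - i\<bar> + p t - 1) choose (nat \<bar>j - i\<bar> - p t))
               else 0))
       \<and> (\<kappa> = 1 \<longrightarrow> (\<forall>i j. B (w (\<sigma>+1) i) (w (\<sigma>+1) j) = 0))
       \<and> (\<forall>t\<in>{1..\<sigma>+\<kappa>}. \<forall>r\<in>{1..\<sigma>+\<kappa>}. t \<noteq> r \<longrightarrow> (\<forall>i j. B (w t i) (w r j) = 0))"
proof -
  interpret S: setting nn n \<kappa> \<sigma> B Q g p n_as w
    by (rule setting.intro[OF Bbil cases kappa nn_def Q0_or_char2 p_mono p_pos p_sum g_Is g_unip jnf blocks adapt])
  show ?thesis using S.final_a S.final_b S.final_c by blast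
qed

end
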